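(* Let $L$ be a poset and let $\mathcal P$ be the set of subsets of $L$ which, with the induced order, have a maximum and a minimum. Let $A_{\mathcal P}$ be the algebra with basis $\mathcal P$ and product $P*Q=P\cup Q$ if $1_P=0_Q$, and $P*Q=0$ otherwise. For $P\in\mathcal P$ let $\Delta(P)=(\Delta_\lambda(P),\Delta_\rho(P))\in M(A_{\mathcal P}\otimes A_{\mathcal P})$ be given by $$\Delta_\lambda(P)(Q\otimes R)=\sum_{x\in P_0}(-\infty,x]_P*Q\otimes[x,+\infty)_P*R,\qquad \Delta_\rho(P)(Q\otimes R)=\sum_{x\in P_0}Q*(-\infty,x]_P\otimes R*[x,+\infty)_P .$$ Then for all $P,S\in\mathcal P$, the multipliers $\Delta(P)(S\otimes 1)$ and $(1\otimes S)\Delta(P)$ belong to (the image of) $A_{\mathcal P}\otimes A_{\mathcal P}$ in $M(A_{\mathcal P}\otimes A_{\mathcal P})$.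
   Context: For $P\in\mathcal P$, $1_P$ and $0_P$ denote the maximum and minimum of $P$, and $P_0=P\setminus\{1_P\}$. For $x\in P_0$, $(-\infty,x]_P=\{y\in P: y\le x\}$ and $[x,+\infty)_P=\{y\in P:x\le y\}$ (these lie in $\mathcal P$). The product $*$ is extended bilinearly; it is associative and non-degenerate. For an algebra $B$ with non-degenerate product, $M(B)$ is the multiplier algebra: pairs $(\lambda,\rho)$ of linear maps $B\to B$ with $\lambda(bc)=\lambda(b)c$, $\rho(bc)=b\rho(c)$ and $b\lambda(c)=\rho(b)c$, with product $(\lambda,\rho)(\lambda',\rho')=(\lambda\circ\lambda',\rho'\circ\rho)$ and identity $1=(\mathrm{id},\mathrm{id})$; $B$ embeds in $M(B)$ via $b\mapsto(\lambda_b,\rho_b)$, $\lambda_b(c)=bc$, $\rho_b(c)=cb$. Here $B=A_{\mathcal P}\otimes A_{\mathcal P}$ with componentwise product, $\Delta_\lambda(P),\Delta_\rho(P)$ are extended linearly, and $S\otimes 1$, $1\otimes S$ denote the multipliers acting by $*$-multiplication by $S$ on the first, respectively second, tensor factor. *)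

theory Defs
  imports Main
begin

definition is_max :: "'a::order set \<Rightarrow> 'a \<Rightarrow> bool" where
  "is_max P m \<longleftrightarrow> m \<in> P \<and> (\<forall>y\<in>P. y \<le> m)"

definition is_min :: "'a::order set \<Rightarrow> 'a \<Rightarrow> bool" where
  "is_min P m \<longleftrightarrow> m \<in> P \<and> (\<forall>y\<in>P. m \<le> y)"

definition calP :: "'a::order set \<Rightarrow> 'a set set" where
  "calP L = {P. P \<subseteq> L \<and> (\<exists>m. is_max P m) \<and> (\<exists>m. is_min P m)}"

definition top1 :: "'a::order set \<Rightarrow> 'a" where
  "top1 P = (THE m. is_max P m)"

definition bot0 :: "'a::order set \<Rightarrow> 'a" where
  "bot0 P = (THE m. is_min P m)"

definition Pzero :: "'a::order set \<Rightarrow> 'a set" where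
  "Pzero P = P - {top1 P}"

definition down :: "'a::order set \<Rightarrow> 'a \<Rightarrow> 'a set" where
  "down P x = {y \<in> P. y \<le> x}"

definition up :: "'a::order set \<Rightarrow> 'a \<Rightarrow> 'a set" where
  "up P x = {y \<in> P. x \<le> y}"

text \<open>Elements of A_P \<otimes> A_P over a field 'k: finitely supported coefficient
  functions on the basis P x P.\<close>
type_synonym ('a, 'k) tens = "'a set \<times> 'a set \<Rightarrow> 'k"

definition supp :: "('a, 'k::zero) tens \<Rightarrow> ('a set \<times> 'a set) set" where
  "supp f = {p. f p \<noteq> 0}"

definition inB :: "'a::order set \<Rightarrow> ('a, 'k::zero) tens \<Rightarrow> bool" where
  "inB L f \<longleftrightarrow> finite (supp f) \<and> supp f \<subseteq> calP L \<times> calP L"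

definition single :: "'a set \<times> 'a set \<Rightarrow> ('a, 'k::{zero,one}) tens" where
  "single p = (\<lambda>r. if r = p then 1 else 0)"

text \<open>Product of basis tensors (P1 \<otimes> P2)(Q1 \<otimes> Q2) = (P1*Q1) \<otimes> (P2*Q2),
  where P*Q = P \<union> Q if 1_P = 0_Q and 0 otherwise.\<close>
definition bmul :: "'a::order set \<times> 'a set \<Rightarrow> 'a set \<times> 'a set \<Rightarrow> ('a, 'k::{zero,one}) tens" where
  "bmul p q = (if top1 (fst p) = bot0 (fst q) \<and> top1 (snd p) = bot0 (snd q)
               then single (fst p \<union> fst q, snd p \<union> snd q) else (\<lambda>_. 0))"

definition tmult :: "('a::order, 'k::field) tens \<Rightarrow> ('a, 'k) tens \<Rightarrow> ('a, 'k) tens" where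
  "tmult u v = (\<lambda>r. \<Sum>(p, q) \<in> supp u \<times> supp v. u p * v q * bmul p q r)"

definition fsum :: "('b \<Rightarrow> 'k::comm_monoid_add) \<Rightarrow> 'b set \<Rightarrow> 'k" where
  "fsum f A = sum f {x \<in> A. f x \<noteq> 0}"

definition Delta_l :: "'a::order set \<Rightarrow> ('a, 'k::field) tens \<Rightarrow> ('a, 'k) tens" where
  "Delta_l P w = (\<lambda>r. \<Sum>q \<in> supp w.
      w q * fsum (\<lambda>x. bmul (down P x, up P x) q r) (Pzero P))"

definition Delta_r :: "'a::order set \<Rightarrow> ('a, 'k::field) tens \<Rightarrow> ('a, 'k) tens" where
  "Delta_r P w = (\<lambda>r. \<Sum>q \<in> supp w.
      w q * fsum (\<lambda>x. bmul q (down P x, up P x) r) (Pzero P))"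

text \<open>The multipliers S \<otimes> 1 and 1 \<otimes> S: left and right actions.\<close>
definition lS1 :: "'a::order set \<Rightarrow> ('a, 'k::field) tens \<Rightarrow> ('a, 'k) tens" where
  "lS1 S w = (\<lambda>r. \<Sum>q \<in> supp w.
      w q * (if top1 S = bot0 (fst q) then single (S \<union> fst q, snd q) r else 0))"

definition rS1 :: "'a::order set \<Rightarrow> ('a, 'k::field) tens \<Rightarrow> ('a, 'k) tens" where
  "rS1 S w = (\<lambda>r. \<Sum>q \<in> supp w.
      w q * (if top1 (fst q) = bot0 S then single (fst q \<union> S, snd q) r else 0))"

definition l1S :: "'a::order set \<Rightarrow> ('a, 'k::field) tens \<Rightarrow> ('a, 'k) tens" where
  "l1S S w = (\<lambda>r. \<Sum>q \<in> supp w.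
      w q * (if top1 S = bot0 (snd q) then single (fst q, S \<union> snd q) r else 0))"

definition r1S :: "'a::order set \<Rightarrow> ('a, 'k::field) tens \<Rightarrow> ('a, 'k) tens" where
  "r1S S w = (\<lambda>r. \<Sum>q \<in> supp w.
      w q * (if top1 (snd q) = bot0 S then single (fst q, snd q \<union> S) r else 0))"

definition in_image_B :: "'a::order set \<Rightarrow> (('a, 'k::field) tens \<Rightarrow> ('a, 'k) tens)
    \<Rightarrow> (('a, 'k) tens \<Rightarrow> ('a, 'k) tens) \<Rightarrow> bool" where
  "in_image_B L lam rho \<longleftrightarrow>
     (\<exists>b. inB L b \<and> (\<forall>w. inB L w \<longrightarrow> lam w = tmult b w \<and> rho w = tmult w b))"

end

theory Submission
  imports Defs
begin

lemma max_unique: "is_max P m \<Longrightarrow> top1 P = m"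
  unfolding top1_def by (rule the_equality) (auto simp: is_max_def intro: order.antisym)

lemma min_unique: "is_min P m \<Longrightarrow> bot0 P = m"
  unfolding bot0_def by (rule the_equality) (auto simp: is_min_def intro: order.antisym)

lemma calP_top: "P \<in> calP L \<Longrightarrow> top1 P \<in> P \<and> (\<forall>y\<in>P. y \<le> top1 P)"
proof -
  assume "P \<in> calP L"
  then obtain m where m: "is_max P m" unfolding calP_def by blast
  then have "top1 P = m" by (rule max_unique)
  then show ?thesis using m unfolding is_max_def by simp
qed

lemma calP_bot: "P \<in> calP L \<Longrightarrow> bot0 P \<in> P \<and> (\<forall>y\<in>P. bot0 P \<le> y)"
proof -
  assume "P \<in> calP L"
  then obtain m where m: "is_min P m" unfolding calP_def by blast
  then have "bot0 P = m" by (rule min_unique)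
  then show ?thesis using m unfolding is_min_def by simp
qed

lemma calP_sub: "P \<in> calP L \<Longrightarrow> P \<subseteq> L"
  unfolding calP_def by auto

lemma down_props:
  assumes "P \<in> calP L" "x \<in> P"
  shows "down P x \<in> calP L \<and> top1 (down P x) = x \<and> bot0 (down P x) = bot0 P"
proof -
  have m1: "is_max (down P x) x" using assms by (auto simp: is_max_def down_def)
  have m2: "is_min (down P x) (bot0 P)" using assms calP_bot[OF assms(1)]
    by (auto simp: is_min_def down_def)
  show ?thesis using m1 m2 max_unique min_unique calP_sub[OF assms(1)]
    by (auto simp: calP_def down_def)
qed

lemma up_props:
  assumes "P \<in> calP L" "x \<in> P"
  shows "up P x \<in> calP L \<and> top1 (up P x) = top1 P \<and> bot0 (up P x) = x"
proof -
  have m1: "is_min (up P x) x" using assms by (auto simp: is_min_def up_def)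
  have m2: "is_max (up P x) (top1 P)" using assms calP_top[OF assms(1)]
    by (auto simp: is_max_def up_def)
  show ?thesis using m1 m2 max_unique min_unique calP_sub[OF assms(1)]
    by (auto simp: calP_def up_def)
qed

lemma un_props:
  assumes "A \<in> calP L" "B \<in> calP L" "top1 A = bot0 B"
  shows "A \<union> B \<in> calP L \<and> top1 (A \<union> B) = top1 B \<and> bot0 (A \<union> B) = bot0 A"
proof -
  note a = calP_top[OF assms(1)] calP_bot[OF assms(1)] calP_top[OF assms(2)] calP_bot[OF assms(2)]
  have m1: "is_max (A \<union> B) (top1 B)" using a assms(3) unfolding is_max_def
    by (metis Un_iff order.trans)
  have m2: "is_min (A \<union> B) (bot0 A)" using a assms(3) unfolding is_min_def
    by (metis Un_iff order.trans)
  show ?thesis using m1 m2 max_unique min_unique calP_sub[OF assms(1)] calP_sub[OF assms(2)]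
    by (auto simp: calP_def)
qed

definition lin :: "('p \<Rightarrow> 'p \<Rightarrow> 'k::field) \<Rightarrow> ('p \<Rightarrow> 'k) \<Rightarrow> 'p \<Rightarrow> 'k" where
  "lin G w = (\<lambda>r. \<Sum>q \<in> {p. w p \<noteq> 0}. w q * G q r)"

lemma supp_eq: "supp f = {p. f p \<noteq> 0}" by (simp add: supp_def)

lemma lin_superset:
  assumes "finite A" "{p. w p \<noteq> 0} \<subseteq> A"
  shows "lin G w r = (\<Sum>q\<in>A. w q * G q r)"
  unfolding lin_def using assms by (intro sum.mono_neutral_left) auto

lemma lin_comp:
  fixes F G :: "'p \<Rightarrow> 'p \<Rightarrow> 'k::field"
  assumes fin: "finite {p. w p \<noteq> 0}" and finF: "\<forall>q. w q \<noteq> 0 \<longrightarrow> finite {p. F q p \<noteq> 0}"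
  shows "lin G (lin F w) = lin (\<lambda>q r. lin G (F q) r) w"
proof
  fix r
  define A where "A = {p. w p \<noteq> 0}"
  define C where "C = (\<Union>q\<in>A. {p. F q p \<noteq> 0})"
  have fC: "finite C" using fin finF unfolding C_def A_def by auto
  have sub: "{p. lin F w p \<noteq> 0} \<subseteq> C"
  proof
    fix p assume "p \<in> {p. lin F w p \<noteq> 0}"
    then have "(\<Sum>q\<in>A. w q * F q p) \<noteq> 0" by (simp add: lin_def A_def)
    then obtain q where "q \<in> A" "w q * F q p \<noteq> 0" using sum.not_neutral_contains_not_neutral by blast
    then show "p \<in> C" unfolding C_def by auto
  qed
  have "lin G (lin F w) r = (\<Sum>p\<in>C. lin F w p * G p r)"
    by (rule lin_superset[OF fC sub])
  also have "\<dots> = (\<Sum>p\<in>C. (\<Sum>q\<in>A. w q * F q p) * G p r)"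
    by (simp add: lin_def A_def)
  also have "\<dots> = (\<Sum>p\<in>C. \<Sum>q\<in>A. w q * F q p * G p r)"
    by (simp only: sum_distrib_right)
  also have "\<dots> = (\<Sum>q\<in>A. \<Sum>p\<in>C. w q * F q p * G p r)"
    by (rule sum.swap)
  also have "\<dots> = (\<Sum>q\<in>A. w q * (\<Sum>p\<in>C. F q p * G p r))"
    by (simp only: sum_distrib_left mult.assoc)
  also have "\<dots> = (\<Sum>q\<in>A. w q * lin G (F q) r)"
  proof (rule sum.cong[OF refl])
    fix q assume "q \<in> A"
    then have "{p. F q p \<noteq> 0} \<subseteq> C" unfolding C_def by auto
    then show "w q * (\<Sum>p\<in>C. F q p * G p r) = w q * lin G (F q) r"
      using lin_superset[OF fC, of "F q" G r] by simp
  qed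
  also have "\<dots> = lin (\<lambda>q r. lin G (F q) r) w r" by (simp add: lin_def A_def)
  finally show "lin G (lin F w) r = lin (\<lambda>q r. lin G (F q) r) w r" .
qed

lemma lin_cong: "(\<And>q r. w q \<noteq> 0 \<Longrightarrow> H1 q r = H2 q r) \<Longrightarrow> lin H1 w = lin H2 w"
  unfolding lin_def by (intro ext sum.cong) auto

lemma lin_single: "lin G (single p :: ('a,'k::field) tens) r = G p r"
proof -
  have "{q. (single p :: ('a,'k) tens) q \<noteq> 0} = {p}" by (auto simp: single_def)
  then show ?thesis by (simp add: lin_def single_def)
qed

lemma lin_zero: "lin G (\<lambda>_. 0) r = 0"
  by (simp add: lin_def)

lemma fin_single: "finite {q. (single p :: ('a,'k::field) tens) q \<noteq> 0}"
proof -
  have "{q. (single p :: ('a,'k) tens) q \<noteq> 0} = {p}" by (auto simp: single_def)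
  then show ?thesis by simp
qed

lemma fsum_point:
  assumes "\<forall>x\<in>A. x \<noteq> a \<longrightarrow> f x = 0"
  shows "fsum f A = (if a \<in> A then f a else 0)"
proof -
  have "{x \<in> A. f x \<noteq> 0} = (if a \<in> A \<and> f a \<noteq> 0 then {a} else {})" using assms by auto
  then show ?thesis unfolding fsum_def by auto
qed

lemma tmult_l:
  "tmult (if c then single p else (\<lambda>_. 0)) (w :: ('a::order,'k::field) tens)
   = lin (\<lambda>q r. if c then bmul p q r else 0) w"
proof (cases c)
  case True
  have s: "supp (single p :: ('a,'k) tens) = {p}" by (auto simp: single_def supp_def)
  show ?thesis using True unfolding tmult_def lin_def s
    by (simp add: sum.cartesian_product[symmetric] single_def supp_def)
next
  case False
  then show ?thesis by (simp add: tmult_def lin_def supp_def)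
qed

lemma tmult_r:
  "tmult (w :: ('a::order,'k::field) tens) (if c then single p else (\<lambda>_. 0))
   = lin (\<lambda>q r. if c then bmul q p r else 0) w"
proof (cases c)
  case True
  have s: "supp (single p :: ('a,'k) tens) = {p}" by (auto simp: single_def supp_def)
  show ?thesis using True unfolding tmult_def lin_def s
    by (simp add: sum.cartesian_product[symmetric] single_def supp_def)
next
  case False
  then show ?thesis by (simp add: tmult_def lin_def supp_def)
qed

definition DLk :: "'a::order set \<Rightarrow> 'a set \<times> 'a set \<Rightarrow> ('a, 'k::field) tens" where
  "DLk P q r = fsum (\<lambda>x. bmul (down P x, up P x) q r) (Pzero P)"
definition DRk :: "'a::order set \<Rightarrow> 'a set \<times> 'a set \<Rightarrow> ('a, 'k::field) tens" where
  "DRk P q r = fsum (\<lambda>x. bmul q (down P x, up P x) r) (Pzero P)"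
definition LSk :: "'a::order set \<Rightarrow> 'a set \<times> 'a set \<Rightarrow> ('a, 'k::field) tens" where
  "LSk S q r = (if top1 S = bot0 (fst q) then single (S \<union> fst q, snd q) r else 0)"
definition RSk :: "'a::order set \<Rightarrow> 'a set \<times> 'a set \<Rightarrow> ('a, 'k::field) tens" where
  "RSk S q r = (if top1 (fst q) = bot0 S then single (fst q \<union> S, snd q) r else 0)"
definition L1k :: "'a::order set \<Rightarrow> 'a set \<times> 'a set \<Rightarrow> ('a, 'k::field) tens" where
  "L1k S q r = (if top1 S = bot0 (snd q) then single (fst q, S \<union> snd q) r else 0)"
definition R1k :: "'a::order set \<Rightarrow> 'a set \<times> 'a set \<Rightarrow> ('a, 'k::field) tens" where
  "R1k S q r = (if top1 (snd q) = bot0 S then single (fst q, snd q \<union> S) r else 0)"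

lemma Delta_l_lin: "Delta_l P w = lin (DLk P) w"
  unfolding Delta_l_def lin_def DLk_def supp_def by simp
lemma Delta_r_lin: "Delta_r P w = lin (DRk P) w"
  unfolding Delta_r_def lin_def DRk_def supp_def by simp
lemma lS1_lin: "lS1 S w = lin (LSk S) w"
  unfolding lS1_def lin_def LSk_def supp_def by simp
lemma rS1_lin: "rS1 S w = lin (RSk S) w"
  unfolding rS1_def lin_def RSk_def supp_def by simp
lemma l1S_lin: "l1S S w = lin (L1k S) w"
  unfolding l1S_def lin_def L1k_def supp_def by simp
lemma r1S_lin: "r1S S w = lin (R1k S) w"
  unfolding r1S_def lin_def R1k_def supp_def by simp

lemma fin_if: "finite {r. (if c then single p r else 0 :: 'k::field) \<noteq> 0}"
proof -
  have "{r. (if c then single p r else 0 :: 'k) \<noteq> 0} \<subseteq> {p}" by (auto simp: single_def)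
  then show ?thesis by (rule finite_subset) simp
qed

lemma fin_LSk: "finite {r. LSk S q r \<noteq> 0}" unfolding LSk_def by (rule fin_if)
lemma fin_RSk: "finite {r. RSk S q r \<noteq> 0}" unfolding RSk_def by (rule fin_if)
lemma fin_L1k: "finite {r. L1k S q r \<noteq> 0}" unfolding L1k_def by (rule fin_if)
lemma fin_R1k: "finite {r. R1k S q r \<noteq> 0}" unfolding R1k_def by (rule fin_if)

lemma DLk_closed:
  assumes "P \<in> calP L"
  shows "DLk P (Q,R) r = (if bot0 Q \<in> Pzero P \<and> top1 P = bot0 R
     then single (down P (bot0 Q) \<union> Q, up P (bot0 Q) \<union> R) r else (0::'k::field))"
proof -
  have "\<forall>x\<in>Pzero P. x \<noteq> bot0 Q \<longrightarrow> bmul (down P x, up P x) (Q,R) r = (0::'k)"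
    using down_props[OF assms] by (auto simp: bmul_def Pzero_def)
  then have "DLk P (Q,R) r = (if bot0 Q \<in> Pzero P then bmul (down P (bot0 Q), up P (bot0 Q)) (Q,R) r else (0::'k))"
    unfolding DLk_def
    by (rule fsum_point[where a="bot0 Q" and f="\<lambda>x. bmul (down P x, up P x) (Q,R) r"])
  then show ?thesis using down_props[OF assms] up_props[OF assms]
    by (auto simp: bmul_def Pzero_def)
qed

lemma DRk_closed:
  assumes "P \<in> calP L"
  shows "DRk P (Q,R) r = (if top1 Q = bot0 P \<and> top1 R \<in> Pzero P
     then single (Q \<union> down P (top1 R), R \<union> up P (top1 R)) r else (0::'k::field))"
proof -
  have "\<forall>x\<in>Pzero P. x \<noteq> top1 R \<longrightarrow> bmul (Q,R) (down P x, up P x) r = (0::'k)"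
    using up_props[OF assms] by (auto simp: bmul_def Pzero_def)
  then have "DRk P (Q,R) r = (if top1 R \<in> Pzero P then bmul (Q,R) (down P (top1 R), up P (top1 R)) r else (0::'k))"
    unfolding DRk_def
    by (rule fsum_point[where a="top1 R" and f="\<lambda>x. bmul (Q,R) (down P x, up P x) r"])
  then show ?thesis using down_props[OF assms] up_props[OF assms]
    by (auto simp: bmul_def Pzero_def)
qed

lemma fin_DLk: assumes "P \<in> calP L" shows "finite {r. DLk P q r \<noteq> (0::'k::field)}"
proof -
  obtain Q R where q: "q = (Q,R)" by (cases q)
  show ?thesis unfolding q DLk_closed[OF assms] by (rule fin_if)
qed
lemma fin_DRk: assumes "P \<in> calP L" shows "finite {r. DRk P q r \<noteq> (0::'k::field)}"
proof -
  obtain Q R where q: "q = (Q,R)" by (cases q)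
  show ?thesis unfolding q DRk_closed[OF assms] by (rule fin_if)
qed

lemma part1L:
  assumes P: "P \<in> calP L" and S: "S \<in> calP L" and Q: "Q \<in> calP L" and R: "R \<in> calP L"
  shows "lin (DLk P) (LSk S (Q,R)) r = (if bot0 S \<in> Pzero P then
     bmul (down P (bot0 S) \<union> S, up P (bot0 S)) (Q,R) r else (0::'k::field))"
proof (cases "top1 S = bot0 Q")
  case True
  have e: "LSk S (Q,R) = single (S \<union> Q, R)" using True by (auto simp: LSk_def)
  note u = un_props[OF S Q True]
  show ?thesis
  proof (cases "bot0 S \<in> Pzero P")
    case c: True
    then have x: "bot0 S \<in> P" by (simp add: Pzero_def)
    note d = down_props[OF P x] and up = up_props[OF P x]
    note u2 = un_props[OF conjunct1[OF d] S conjunct1[OF conjunct2[OF d]]]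
    show ?thesis unfolding e lin_single DLk_closed[OF P] using c u u2 d up True
      by (simp add: bmul_def Un_assoc)
  next
    case c: False
    show ?thesis unfolding e lin_single DLk_closed[OF P] using c u by simp
  qed
next
  case False
  have e: "LSk S (Q,R) = (\<lambda>_. 0)" using False by (auto simp: LSk_def)
  show ?thesis
  proof (cases "bot0 S \<in> Pzero P")
    case c: True
    then have x: "bot0 S \<in> P" by (simp add: Pzero_def)
    note d = down_props[OF P x]
    note u2 = un_props[OF conjunct1[OF d] S conjunct1[OF conjunct2[OF d]]]
    show ?thesis unfolding e lin_zero using c u2 False by (simp add: bmul_def)
  next
    case c: False
    show ?thesis unfolding e lin_zero using c by simp
  qed
qed

lemma part1R:
  assumes P: "P \<in> calP L" and S: "S \<in> calP L" and Q: "Q \<in> calP L" and R: "R \<in> calP L"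
  shows "lin (RSk S) (DRk P (Q,R)) r = (if bot0 S \<in> Pzero P then
     bmul (Q,R) (down P (bot0 S) \<union> S, up P (bot0 S)) r else (0::'k::field))"
proof (cases "top1 Q = bot0 P \<and> top1 R \<in> Pzero P")
  case True
  have e: "DRk P (Q,R) = single (Q \<union> down P (top1 R), R \<union> up P (top1 R))"
    using True by (auto simp: DRk_closed[OF P])
  have x: "top1 R \<in> P" using True by (simp add: Pzero_def)
  note d = down_props[OF P x] and up = up_props[OF P x]
  note u = un_props[OF Q conjunct1[OF d]]
  have tq: "top1 (Q \<union> down P (top1 R)) = top1 R" using u True d by simp
  show ?thesis
  proof (cases "bot0 S \<in> Pzero P")
    case c: True
    then have y: "bot0 S \<in> P" by (simp add: Pzero_def)
    note d' = down_props[OF P y] and up' = up_props[OF P y]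
    note u2 = un_props[OF conjunct1[OF d'] S conjunct1[OF conjunct2[OF d']]]
    show ?thesis unfolding e lin_single using tq True u2 d' up'
      by (auto simp: bmul_def RSk_def Un_assoc)
  next
    case c: False
    show ?thesis unfolding e lin_single using tq c True by (auto simp: RSk_def)
  qed
next
  case False
  have e: "DRk P (Q,R) = (\<lambda>_. 0)" using False by (auto simp: DRk_closed[OF P])
  show ?thesis
  proof (cases "bot0 S \<in> Pzero P")
    case c: True
    then have y: "bot0 S \<in> P" by (simp add: Pzero_def)
    note d' = down_props[OF P y] and up' = up_props[OF P y]
    note u2 = un_props[OF conjunct1[OF d'] S conjunct1[OF conjunct2[OF d']]]
    show ?thesis unfolding e lin_zero using c u2 False d' up' by (auto simp: bmul_def)
  next
    case c: False
    show ?thesis unfolding e lin_zero using c by simp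
  qed
qed

lemma part2L:
  assumes P: "P \<in> calP L" and S: "S \<in> calP L" and Q: "Q \<in> calP L" and R: "R \<in> calP L"
  shows "lin (L1k S) (DLk P (Q,R)) r = (if top1 S \<in> Pzero P then
     bmul (down P (top1 S), S \<union> up P (top1 S)) (Q,R) r else (0::'k::field))"
proof (cases "bot0 Q \<in> Pzero P \<and> top1 P = bot0 R")
  case True
  have e: "DLk P (Q,R) = single (down P (bot0 Q) \<union> Q, up P (bot0 Q) \<union> R)"
    using True by (auto simp: DLk_closed[OF P])
  have x: "bot0 Q \<in> P" using True by (simp add: Pzero_def)
  note d = down_props[OF P x] and up = up_props[OF P x]
  note u = un_props[OF conjunct1[OF up] R]
  have bq: "bot0 (up P (bot0 Q) \<union> R) = bot0 Q" using u True up by simp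
  show ?thesis
  proof (cases "top1 S \<in> Pzero P")
    case c: True
    then have y: "top1 S \<in> P" by (simp add: Pzero_def)
    note d' = down_props[OF P y] and up' = up_props[OF P y]
    note u2 = un_props[OF S conjunct1[OF up']]
    show ?thesis unfolding e lin_single using bq True u2 d' up'
      by (auto simp: bmul_def L1k_def Un_assoc)
  next
    case c: False
    show ?thesis unfolding e lin_single using bq c True by (auto simp: L1k_def)
  qed
next
  case False
  have e: "DLk P (Q,R) = (\<lambda>_. 0)" using False by (auto simp: DLk_closed[OF P])
  show ?thesis
  proof (cases "top1 S \<in> Pzero P")
    case c: True
    then have y: "top1 S \<in> P" by (simp add: Pzero_def)
    note d' = down_props[OF P y] and up' = up_props[OF P y]
    note u2 = un_props[OF S conjunct1[OF up']]
    show ?thesis unfolding e lin_zero using c u2 False d' up' by (auto simp: bmul_def)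
  next
    case c: False
    show ?thesis unfolding e lin_zero using c by simp
  qed
qed

lemma part2R:
  assumes P: "P \<in> calP L" and S: "S \<in> calP L" and Q: "Q \<in> calP L" and R: "R \<in> calP L"
  shows "lin (DRk P) (R1k S (Q,R)) r = (if top1 S \<in> Pzero P then
     bmul (Q,R) (down P (top1 S), S \<union> up P (top1 S)) r else (0::'k::field))"
proof (cases "top1 R = bot0 S")
  case True
  have e: "R1k S (Q,R) = single (Q, R \<union> S)" using True by (auto simp: R1k_def)
  note u = un_props[OF R S True]
  show ?thesis
  proof (cases "top1 S \<in> Pzero P")
    case c: True
    then have x: "top1 S \<in> P" by (simp add: Pzero_def)
    note d = down_props[OF P x] and up = up_props[OF P x]
    note u2 = un_props[OF S conjunct1[OF up]]
    show ?thesis unfolding e lin_single DRk_closed[OF P] using c u u2 d up True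
      by (auto simp: bmul_def Un_assoc)
  next
    case c: False
    show ?thesis unfolding e lin_single DRk_closed[OF P] using c u by simp
  qed
next
  case False
  have e: "R1k S (Q,R) = (\<lambda>_. 0)" using False by (auto simp: R1k_def)
  show ?thesis
  proof (cases "top1 S \<in> Pzero P")
    case c: True
    then have x: "top1 S \<in> P" by (simp add: Pzero_def)
    note up = up_props[OF P x]
    note u2 = un_props[OF S conjunct1[OF up]]
    show ?thesis unfolding e lin_zero using c u2 False up by (auto simp: bmul_def)
  next
    case c: False
    show ?thesis unfolding e lin_zero using c by simp
  qed
qed

lemma inB_single: "p \<in> calP L \<times> calP L \<Longrightarrow> inB L (if c then single p else (\<lambda>_. 0) :: ('a::order,'k::field) tens)"
proof -
  assume p: "p \<in> calP L \<times> calP L"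
  have "supp (if c then single p else (\<lambda>_. 0) :: ('a,'k) tens) \<subseteq> {p}"
    by (auto simp: supp_def single_def split: if_splits)
  moreover have "finite {p}" by simp
  ultimately have "finite (supp (if c then single p else (\<lambda>_. 0) :: ('a,'k) tens))"
    by (rule finite_subset)
  moreover have "supp (if c then single p else (\<lambda>_. 0) :: ('a,'k) tens) \<subseteq> calP L \<times> calP L"
    using \<open>supp _ \<subseteq> {p}\<close> p by blast
  ultimately show ?thesis unfolding inB_def by blast
qed

lemma inB_mem: "inB L w \<Longrightarrow> w q \<noteq> 0 \<Longrightarrow> fst q \<in> calP L \<and> snd q \<in> calP L"
  unfolding inB_def supp_def by auto

lemma inB_fin: "inB L w \<Longrightarrow> finite {p. w p \<noteq> 0}"
  unfolding inB_def supp_def by auto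

theorem lemma1p10:
  fixes L :: "'a::order set" and P S :: "'a set"
  assumes "P \<in> calP L" and "S \<in> calP L"
  shows "in_image_B L (\<lambda>w. Delta_l P (lS1 S w) :: ('a, 'k::field) tens) (\<lambda>w. rS1 S (Delta_r P w))
       \<and> in_image_B L (\<lambda>w. l1S S (Delta_l P w) :: ('a, 'k::field) tens) (\<lambda>w. Delta_r P (r1S S w))"
proof
  note P = assms(1) and S = assms(2)
  define c1 where "c1 = (bot0 S \<in> Pzero P)"
  define p1 where "p1 = (down P (bot0 S) \<union> S, up P (bot0 S))"
  define b1 :: "('a,'k) tens" where "b1 = (if c1 then single p1 else (\<lambda>_. 0))"
  have b1: "inB L b1"
  proof (cases c1)
    case True
    then have x: "bot0 S \<in> P" by (simp add: c1_def Pzero_def)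
    note d = down_props[OF P x] and up = up_props[OF P x]
    note u2 = un_props[OF conjunct1[OF d] S conjunct1[OF conjunct2[OF d]]]
    show ?thesis unfolding b1_def by (rule inB_single) (use u2 up in \<open>simp add: p1_def\<close>)
  next
    case False
    then show ?thesis unfolding b1_def inB_def supp_def by simp
  qed
  show "in_image_B L (\<lambda>w. Delta_l P (lS1 S w) :: ('a, 'k::field) tens) (\<lambda>w. rS1 S (Delta_r P w))"
    unfolding in_image_B_def
  proof (intro exI[of _ b1] conjI allI impI b1)
    fix w :: "('a,'k) tens" assume w: "inB L w"
    have "Delta_l P (lS1 S w) = lin (DLk P) (lin (LSk S) w)" by (simp add: Delta_l_lin lS1_lin)
    also have "\<dots> = lin (\<lambda>q r. lin (DLk P) (LSk S q) r) w"
      by (rule lin_comp) (use inB_fin[OF w] fin_LSk in auto)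
    also have "\<dots> = lin (\<lambda>q r. if c1 then bmul p1 q r else 0) w"
    proof (rule lin_cong)
      fix q r assume "w q \<noteq> 0"
      then have m: "fst q \<in> calP L" "snd q \<in> calP L" using inB_mem[OF w] by auto
      show "lin (DLk P) (LSk S q) r = (if c1 then bmul p1 q r else 0)"
        using part1L[OF P S m, of r, unfolded prod.collapse] unfolding c1_def p1_def by simp
    qed
    also have "\<dots> = tmult b1 w" unfolding b1_def by (rule tmult_l[symmetric])
    finally show "Delta_l P (lS1 S w) = tmult b1 w" .
    have "rS1 S (Delta_r P w) = lin (RSk S) (lin (DRk P) w)" by (simp add: Delta_r_lin rS1_lin)
    also have "\<dots> = lin (\<lambda>q r. lin (RSk S) (DRk P q) r) w"
      by (rule lin_comp) (use inB_fin[OF w] fin_DRk[OF P] in auto)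
    also have "\<dots> = lin (\<lambda>q r. if c1 then bmul q p1 r else 0) w"
    proof (rule lin_cong)
      fix q r assume "w q \<noteq> 0"
      then have m: "fst q \<in> calP L" "snd q \<in> calP L" using inB_mem[OF w] by auto
      show "lin (RSk S) (DRk P q) r = (if c1 then bmul q p1 r else 0)"
        using part1R[OF P S m, of r, unfolded prod.collapse] unfolding c1_def p1_def by simp
    qed
    also have "\<dots> = tmult w b1" unfolding b1_def by (rule tmult_r[symmetric])
    finally show "rS1 S (Delta_r P w) = tmult w b1" .
  qed
  define c2 where "c2 = (top1 S \<in> Pzero P)"
  define p2 where "p2 = (down P (top1 S), S \<union> up P (top1 S))"
  define b2 :: "('a,'k) tens" where "b2 = (if c2 then single p2 else (\<lambda>_. 0))"
  have b2: "inB L b2"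
  proof (cases c2)
    case True
    then have x: "top1 S \<in> P" by (simp add: c2_def Pzero_def)
    note d = down_props[OF P x] and up = up_props[OF P x]
    note u2 = un_props[OF S conjunct1[OF up]]
    show ?thesis unfolding b2_def by (rule inB_single) (use u2 up d in \<open>simp add: p2_def\<close>)
  next
    case False
    then show ?thesis unfolding b2_def inB_def supp_def by simp
  qed
  show "in_image_B L (\<lambda>w. l1S S (Delta_l P w) :: ('a, 'k::field) tens) (\<lambda>w. Delta_r P (r1S S w))"
    unfolding in_image_B_def
  proof (intro exI[of _ b2] conjI allI impI b2)
    fix w :: "('a,'k) tens" assume w: "inB L w"
    have "l1S S (Delta_l P w) = lin (L1k S) (lin (DLk P) w)" by (simp add: Delta_l_lin l1S_lin)
    also have "\<dots> = lin (\<lambda>q r. lin (L1k S) (DLk P q) r) w"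
      by (rule lin_comp) (use inB_fin[OF w] fin_DLk[OF P] in auto)
    also have "\<dots> = lin (\<lambda>q r. if c2 then bmul p2 q r else 0) w"
    proof (rule lin_cong)
      fix q r assume "w q \<noteq> 0"
      then have m: "fst q \<in> calP L" "snd q \<in> calP L" using inB_mem[OF w] by auto
      show "lin (L1k S) (DLk P q) r = (if c2 then bmul p2 q r else 0)"
        using part2L[OF P S m, of r, unfolded prod.collapse] unfolding c2_def p2_def by simp
    qed
    also have "\<dots> = tmult b2 w" unfolding b2_def by (rule tmult_l[symmetric])
    finally show "l1S S (Delta_l P w) = tmult b2 w" .
    have "Delta_r P (r1S S w) = lin (DRk P) (lin (R1k S) w)" by (simp add: Delta_r_lin r1S_lin)
    also have "\<dots> = lin (\<lambda>q r. lin (DRk P) (R1k S q) r) w"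
      by (rule lin_comp) (use inB_fin[OF w] fin_R1k in auto)
    also have "\<dots> = lin (\<lambda>q r. if c2 then bmul q p2 r else 0) w"
    proof (rule lin_cong)
      fix q r assume "w q \<noteq> 0"
      then have m: "fst q \<in> calP L" "snd q \<in> calP L" using inB_mem[OF w] by auto
      show "lin (DRk P) (R1k S q) r = (if c2 then bmul q p2 r else 0)"
        using part2R[OF P S m, of r, unfolded prod.collapse] unfolding c2_def p2_def by simp
    qed
    also have "\<dots> = tmult w b2" unfolding b2_def by (rule tmult_r[symmetric])
    finally show "Delta_r P (r1S S w) = tmult w b2" .
  qed
qed

end
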